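(* Let $\Pi$ be a safety problem. If $\Pi$ has a proof in the incremental forward-backward proof system with prophecy $\mathbf{FBPI}$, then $\Pi$ is safe.
   Context: A first-order vocabulary $\Sigma$ consists of constant, function and relation symbols; $\Sigma'=\{a' : a\in\Sigma\}$ is a disjoint copy, and for a formula $\varphi$, $\varphi'$ denotes $\varphi$ with every vocabulary symbol replaced by its primed copy. A state is a first-order structure over the vocabulary. A safety problem over $\Sigma$ is a triple $(\iota,\tau,\beta)$, where $\iota$ (initial states) and $\beta$ (bad states) are closed formulas over $\Sigma$ and $\tau$ (transitions) is a closed formula over $\Sigma\uplus\Sigma'$. A pair of states $(s,t)$ over a common domain is a transition if the structure interpreting unprimed symbols as in $s$ and primed ones as in $t$ satisfies $\tau$. A trace is a finite sequence of states over a common domain whose consecutive states form transitions; the problem is safe if there is no trace $s_0,\dots,s_k$ with $s_0\models\iota$, $s_k\models\beta$. $A\Rightarrow B$ means the implication $A\to B$ is valid; $\tau^{-1}$ is $\tau$ with each symbol and its primed counterpart swapped. Proofs: a proof of $\Pi$ in a system is a finite tree whose nodes are safety problems (possibly over different vocabularies), whose root is $\Pi$, and in which each node together with its children is an instance of one of the system's rules, with side conditions valid. $\mathbf{FBPI}$ has the rules (for a safety problem over vocabulary $\Sigma$, $\varphi$ ranging over closed formulas over $\Sigma$ in the first four): (Ind): no premises; conclusion $(\iota,\tau,\neg\varphi)$; side conditions $\iota\Rightarrow\varphi$ and $\varphi\wedge\tau\Rightarrow\varphi'$. (Cons): premise $(\iota,\tau,\neg\varphi)$; conclusion $(\iota,\tau,\beta)$;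 side condition $\varphi\Rightarrow\neg\beta$. (Inc): premises $(\iota,\tau,\neg\varphi)$ and $(\iota\wedge\varphi,\ \tau\wedge\varphi\wedge\varphi',\ \beta\wedge\varphi)$; conclusion $(\iota,\tau,\beta)$. (Rev): premise $(\beta,\tau^{-1},\iota)$; conclusion $(\iota,\tau,\beta)$. (Proph): for $\Pi=(\iota,\tau,\beta)$ over $\Sigma$, a fresh constant symbol $w$, a fresh unary relation symbol $m$, and a formula $\varphi(x)$ over $\Sigma$ with free variable $x$: premises $\Pi^{\mathrm{sound}}_\varphi$ and $\Pi^w_\varphi$; conclusion $\Pi$. Here $\varphi(w)$ is $\varphi$ with $x$ replaced by $w$, $\Pi^w_\varphi=\big(\iota\wedge\varphi(w),\ \varphi(w)\wedge\tau\wedge w'=w\wedge(\varphi(w))',\ \beta\wedge\varphi(w)\big)$ over $\Sigma\cup\{w\}$, and $\Pi^{\mathrm{sound}}_\varphi=\big(\iota\wedge\forall x.\,\varphi(x)\to m(x),\ \tau\wedge\forall x.\,(m(x)\wedge\varphi(x)\wedge\varphi'(x))\to m'(x),\ \beta\wedge\forall x.\,\varphi(x)\to\neg m(x)\big)$ over $\Sigma\cup\{m\}$. *)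

theory Defs
  imports Main
begin

text \<open>A symbol is a base name together with a flag telling whether it is the
primed copy.  Unprimed symbols of a vocabulary have flag False, their primed
copies flag True.  Constants are function symbols of arity 0.\<close>

type_synonym sym = "nat \<times> bool"

datatype kind = FunK nat | RelK nat

type_synonym vocab = "nat \<Rightarrow> kind option"

datatype trm = Var nat | Fn sym "trm list"

datatype fm =
    FF
  | Eq trm trm
  | Pr sym "trm list"
  | Neg fm
  | Conj fm fm
  | Disj fm fm
  | Imp fm fm
  | All nat fm
  | Ex nat fm

fun fv_trm :: "trm \<Rightarrow> nat set" where
  "fv_trm (Var x) = {x}"
| "fv_trm (Fn f ts) = (\<Union>t\<in>set ts. fv_trm t)"

fun fv :: "fm \<Rightarrow> nat set" where
  "fv FF = {}"
| "fv (Eq s t) = fv_trm s \<union> fv_trm t"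
| "fv (Pr r ts) = (\<Union>t\<in>set ts. fv_trm t)"
| "fv (Neg p) = fv p"
| "fv (Conj p q) = fv p \<union> fv q"
| "fv (Disj p q) = fv p \<union> fv q"
| "fv (Imp p q) = fv p \<union> fv q"
| "fv (All x p) = fv p - {x}"
| "fv (Ex x p) = fv p - {x}"

definition closed :: "fm \<Rightarrow> bool" where
  "closed p \<longleftrightarrow> fv p = {}"

text \<open>Well-formedness over a vocabulary; \<open>ps\<close> is the set of admissible prime
flags: \<open>{False}\<close> for formulas over \<open>\<Sigma>\<close>, \<open>UNIV\<close> for formulas over
\<open>\<Sigma> \<uplus> \<Sigma>'\<close>.\<close>
fun wf_trm :: "vocab \<Rightarrow> bool set \<Rightarrow> trm \<Rightarrow> bool" where
  "wf_trm V ps (Var x) = True"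
| "wf_trm V ps (Fn (n, p) ts) =
     (p \<in> ps \<and> V n = Some (FunK (length ts)) \<and> (\<forall>t\<in>set ts. wf_trm V ps t))"

fun wf_fm :: "vocab \<Rightarrow> bool set \<Rightarrow> fm \<Rightarrow> bool" where
  "wf_fm V ps FF = True"
| "wf_fm V ps (Eq s t) = (wf_trm V ps s \<and> wf_trm V ps t)"
| "wf_fm V ps (Pr (n, p) ts) =
     (p \<in> ps \<and> V n = Some (RelK (length ts)) \<and> (\<forall>t\<in>set ts. wf_trm V ps t))"
| "wf_fm V ps (Neg a) = wf_fm V ps a"
| "wf_fm V ps (Conj a b) = (wf_fm V ps a \<and> wf_fm V ps b)"
| "wf_fm V ps (Disj a b) = (wf_fm V ps a \<and> wf_fm V ps b)"
| "wf_fm V ps (Imp a b) = (wf_fm V ps a \<and> wf_fm V ps b)"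
| "wf_fm V ps (All x a) = wf_fm V ps a"
| "wf_fm V ps (Ex x a) = wf_fm V ps a"

fun ren_trm :: "(sym \<Rightarrow> sym) \<Rightarrow> trm \<Rightarrow> trm" where
  "ren_trm g (Var x) = Var x"
| "ren_trm g (Fn f ts) = Fn (g f) (map (ren_trm g) ts)"

fun ren :: "(sym \<Rightarrow> sym) \<Rightarrow> fm \<Rightarrow> fm" where
  "ren g FF = FF"
| "ren g (Eq s t) = Eq (ren_trm g s) (ren_trm g t)"
| "ren g (Pr r ts) = Pr (g r) (map (ren_trm g) ts)"
| "ren g (Neg a) = Neg (ren g a)"
| "ren g (Conj a b) = Conj (ren g a) (ren g b)"
| "ren g (Disj a b) = Disj (ren g a) (ren g b)"
| "ren g (Imp a b) = Imp (ren g a) (ren g b)"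
| "ren g (All x a) = All x (ren g a)"
| "ren g (Ex x a) = Ex x (ren g a)"

definition prime :: "fm \<Rightarrow> fm" where
  "prime = ren (\<lambda>(n, p). (n, True))"

definition inv :: "fm \<Rightarrow> fm" where
  "inv = ren (\<lambda>(n, p). (n, \<not> p))"

text \<open>Substitution of a (closed) term for the free occurrences of a variable.\<close>
fun subst_trm :: "nat \<Rightarrow> trm \<Rightarrow> trm \<Rightarrow> trm" where
  "subst_trm x u (Var y) = (if y = x then u else Var y)"
| "subst_trm x u (Fn f ts) = Fn f (map (subst_trm x u) ts)"

fun subst :: "nat \<Rightarrow> trm \<Rightarrow> fm \<Rightarrow> fm" where
  "subst x u FF = FF"
| "subst x u (Eq s t) = Eq (subst_trm x u s) (subst_trm x u t)"
| "subst x u (Pr r ts) = Pr r (map (subst_trm x u) ts)"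
| "subst x u (Neg a) = Neg (subst x u a)"
| "subst x u (Conj a b) = Conj (subst x u a) (subst x u b)"
| "subst x u (Disj a b) = Disj (subst x u a) (subst x u b)"
| "subst x u (Imp a b) = Imp (subst x u a) (subst x u b)"
| "subst x u (All y a) = (if y = x then All y a else All y (subst x u a))"
| "subst x u (Ex y a) = (if y = x then Ex y a else Ex y (subst x u a))"

text \<open>A state interprets every symbol name (symbols outside the vocabulary
are irrelevant, since well-formed formulas do not mention them).  The
domain is a nonempty set \<open>D :: 'a set\<close>, given separately, so that a trace
consists of states over a common domain.\<close>
record 'a state =
  sfn :: "nat \<Rightarrow> 'a list \<Rightarrow> 'a"
  srl :: "nat \<Rightarrow> 'a list \<Rightarrow> bool"

definition wf_state :: "'a set \<Rightarrow> 'a state \<Rightarrow> bool" where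
  "wf_state D s \<longleftrightarrow> (\<forall>n as. set as \<subseteq> D \<longrightarrow> sfn s n as \<in> D)"

fun teval :: "(sym \<Rightarrow> 'a list \<Rightarrow> 'a) \<Rightarrow> (nat \<Rightarrow> 'a) \<Rightarrow> trm \<Rightarrow> 'a" where
  "teval F e (Var x) = e x"
| "teval F e (Fn f ts) = F f (map (teval F e) ts)"

fun sat :: "'a set \<Rightarrow> (sym \<Rightarrow> 'a list \<Rightarrow> 'a) \<Rightarrow> (sym \<Rightarrow> 'a list \<Rightarrow> bool)
            \<Rightarrow> (nat \<Rightarrow> 'a) \<Rightarrow> fm \<Rightarrow> bool" where
  "sat D F R e FF = False"
| "sat D F R e (Eq s t) = (teval F e s = teval F e t)"
| "sat D F R e (Pr r ts) = R r (map (teval F e) ts)"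
| "sat D F R e (Neg a) = (\<not> sat D F R e a)"
| "sat D F R e (Conj a b) = (sat D F R e a \<and> sat D F R e b)"
| "sat D F R e (Disj a b) = (sat D F R e a \<or> sat D F R e b)"
| "sat D F R e (Imp a b) = (sat D F R e a \<longrightarrow> sat D F R e b)"
| "sat D F R e (All x a) = (\<forall>d\<in>D. sat D F R (e(x := d)) a)"
| "sat D F R e (Ex x a) = (\<exists>d\<in>D. sat D F R (e(x := d)) a)"

definition jfn :: "'a state \<Rightarrow> 'a state \<Rightarrow> sym \<Rightarrow> 'a list \<Rightarrow> 'a" where
  "jfn s t = (\<lambda>(n, p). if p then sfn t n else sfn s n)"

definition jrl :: "'a state \<Rightarrow> 'a state \<Rightarrow> sym \<Rightarrow> 'a list \<Rightarrow> bool" where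
  "jrl s t = (\<lambda>(n, p). if p then srl t n else srl s n)"

text \<open>Satisfaction of a formula by a pair of states (for closed formulas the
environment is irrelevant); a single state \<open>s\<close> satisfies a formula over
\<open>\<Sigma>\<close> iff the pair \<open>(s, s)\<close> does.\<close>
definition sat2 :: "'a set \<Rightarrow> 'a state \<Rightarrow> 'a state \<Rightarrow> fm \<Rightarrow> bool" where
  "sat2 D s t p \<longleftrightarrow> (\<forall>e. (\<forall>x. e x \<in> D) \<longrightarrow> sat D (jfn s t) (jrl s t) e p)"

definition sat1 :: "'a set \<Rightarrow> 'a state \<Rightarrow> fm \<Rightarrow> bool" where
  "sat1 D s p \<longleftrightarrow> sat2 D s s p"

definition valid :: "'a itself \<Rightarrow> fm \<Rightarrow> bool" where
  "valid T p \<longleftrightarrow> (\<forall>(D :: 'a set) s t. D \<noteq> {} \<longrightarrow> wf_state D s \<longrightarrow> wf_state D t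
                     \<longrightarrow> sat2 D s t p)"

text \<open>A safety problem together with its vocabulary: \<open>(\<Sigma>, \<iota>, \<tau>, \<beta>)\<close>.\<close>
type_synonym problem = "vocab \<times> fm \<times> fm \<times> fm"

definition closed_over :: "vocab \<Rightarrow> fm \<Rightarrow> bool" where
  "closed_over V p \<longleftrightarrow> closed p \<and> wf_fm V {False} p"

definition closed_over2 :: "vocab \<Rightarrow> fm \<Rightarrow> bool" where
  "closed_over2 V p \<longleftrightarrow> closed p \<and> wf_fm V UNIV p"

fun wf_problem :: "problem \<Rightarrow> bool" where
  "wf_problem (V, i, tr, b) \<longleftrightarrow> closed_over V i \<and> closed_over2 V tr \<and> closed_over V b"

definition is_trace :: "'a set \<Rightarrow> fm \<Rightarrow> 'a state list \<Rightarrow> bool" where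
  "is_trace D tr ss \<longleftrightarrow> D \<noteq> {} \<and> (\<forall>s\<in>set ss. wf_state D s)
     \<and> (\<forall>i. Suc i < length ss \<longrightarrow> sat2 D (ss ! i) (ss ! Suc i) tr)"

fun safe :: "'a itself \<Rightarrow> problem \<Rightarrow> bool" where
  "safe T (V, i, tr, b) \<longleftrightarrow>
     \<not> (\<exists>(D :: 'a set) ss. ss \<noteq> [] \<and> is_trace D tr ss
            \<and> sat1 D (hd ss) i \<and> sat1 D (last ss) b)"

definition implies :: "'a itself \<Rightarrow> fm \<Rightarrow> fm \<Rightarrow> bool" where
  "implies T a b \<longleftrightarrow> valid T (Imp a b)"

text \<open>\<open>\<Pi>\<^sup>w\<^sub>\<phi>\<close> and \<open>\<Pi>\<^sup>s\<^sup>o\<^sup>u\<^sup>n\<^sup>d\<^sub>\<phi>\<close> for the prophecy rule; \<open>x\<close> is the free variable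
of \<open>\<phi>\<close>, \<open>w\<close> the name of the fresh constant, \<open>m\<close> the name of the fresh unary
relation.\<close>
fun proph_w :: "problem \<Rightarrow> nat \<Rightarrow> fm \<Rightarrow> nat \<Rightarrow> problem" where
  "proph_w (V, i, tr, b) x phi w =
     (let cw = Fn (w, False) []; cw' = Fn (w, True) []; pw = subst x cw phi in
      (V(w \<mapsto> FunK 0),
       Conj i pw,
       Conj pw (Conj tr (Conj (Eq cw' cw) (prime pw))),
       Conj b pw))"

fun proph_sound :: "problem \<Rightarrow> nat \<Rightarrow> fm \<Rightarrow> nat \<Rightarrow> problem" where
  "proph_sound (V, i, tr, b) x phi m =
     (V(m \<mapsto> RelK 1),
      Conj i (All x (Imp phi (Pr (m, False) [Var x]))),
      Conj tr (All x (Imp (Conj (Pr (m, False) [Var x]) (Conj phi (prime phi)))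
                          (Pr (m, True) [Var x]))),
      Conj b (All x (Imp phi (Neg (Pr (m, False) [Var x])))))"

fun rule_inst :: "'a itself \<Rightarrow> problem \<Rightarrow> problem list \<Rightarrow> bool" where
  "rule_inst T (V, i, tr, b) cs \<longleftrightarrow>
     \<comment> \<open>(Ind)\<close>
     (\<exists>phi. closed_over V phi \<and> cs = [] \<and> b = Neg phi
        \<and> implies T i phi \<and> implies T (Conj phi tr) (prime phi))
   \<or> \<comment> \<open>(Cons)\<close>
     (\<exists>phi. closed_over V phi \<and> cs = [(V, i, tr, Neg phi)] \<and> implies T phi (Neg b))
   \<or> \<comment> \<open>(Inc)\<close>
     (\<exists>phi. closed_over V phi \<and>
        cs = [(V, i, tr, Neg phi),
              (V, Conj i phi, Conj tr (Conj phi (prime phi)), Conj b phi)])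
   \<or> \<comment> \<open>(Rev)\<close>
     (cs = [(V, b, inv tr, i)])
   \<or> \<comment> \<open>(Proph)\<close>
     (\<exists>w m x phi. V w = None \<and> V m = None \<and> wf_fm V {False} phi \<and> fv phi \<subseteq> {x}
        \<and> cs = [proph_sound (V, i, tr, b) x phi m, proph_w (V, i, tr, b) x phi w])"

datatype ptree = Node problem "ptree list"

fun root :: "ptree \<Rightarrow> problem" where
  "root (Node p cs) = p"

fun is_proof :: "'a itself \<Rightarrow> ptree \<Rightarrow> bool" where
  "is_proof T (Node p cs) \<longleftrightarrow>
     wf_problem p \<and> rule_inst T p (map root cs) \<and> (\<forall>c\<in>set cs. is_proof T c)"

definition has_fbpi_proof :: "'a itself \<Rightarrow> problem \<Rightarrow> bool" where
  "has_fbpi_proof T p \<longleftrightarrow> (\<exists>P. is_proof T P \<and> root P = p)"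

end

theory Submission
  imports Defs
begin

lemma agree_trm: "wf_trm V ps t \<Longrightarrow> (\<forall>n q. V n \<noteq> None \<longrightarrow> q \<in> ps \<longrightarrow> F (n,q) = F' (n,q))
   \<Longrightarrow> teval F e t = teval F' e t"
proof (induction V ps t rule: wf_trm.induct)
  case (2 V ps n p ts)
  then have m: "map (teval F e) ts = map (teval F' e) ts" by simp
  have "F (n,p) = F' (n,p)" using 2 by auto
  with m show ?case by (simp only: teval.simps)
qed simp

lemma agree_fm: "wf_fm V ps p \<Longrightarrow> (\<forall>n q. V n \<noteq> None \<longrightarrow> q \<in> ps \<longrightarrow> F (n,q) = F' (n,q) \<and> R (n,q) = R' (n,q))
   \<Longrightarrow> sat D F R e p = sat D F' R' e p"
proof (induction V ps p arbitrary: e rule: wf_fm.induct)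
  case (2 V ps s t)
  then show ?case using agree_trm[of V ps _ F F' e] by auto
next
  case (3 V ps n p ts)
  then have m: "map (teval F e) ts = map (teval F' e) ts"
    using agree_trm[of V ps _ F F' e] by simp
  have "R (n,p) = R' (n,p)" using 3 by auto
  with m show ?case by (simp only: sat.simps)
qed auto

lemma env_trm: "\<forall>x\<in>fv_trm t. e x = e' x \<Longrightarrow> teval F e t = teval F e' t"
proof (induction t)
  case (Fn f ts)
  then have "map (teval F e) ts = map (teval F e') ts" by simp
  then show ?case by (simp only: teval.simps)
qed simp

lemma env_fm: "\<forall>x\<in>fv p. e x = e' x \<Longrightarrow> sat D F R e p = sat D F R e' p"
proof (induction p arbitrary: e e')
  case (Eq s t) then show ?case using env_trm[of s e e' F] env_trm[of t e e' F] by auto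
next
  case (Pr r ts)
  then have "map (teval F e) ts = map (teval F e') ts"
    using env_trm[of _ e e' F] by simp
  then show ?case by (simp only: sat.simps)
next
  case (All x a)
  have "\<And>d. sat D F R (e(x:=d)) a = sat D F R (e'(x:=d)) a"
    by (rule All.IH) (use All.prems in auto)
  then show ?case by (simp only: sat.simps)
next
  case (Ex x a)
  have "\<And>d. sat D F R (e(x:=d)) a = sat D F R (e'(x:=d)) a"
    by (rule Ex.IH) (use Ex.prems in auto)
  then show ?case by (simp only: sat.simps)
next
  case (Conj p1 p2)
  have "sat D F R e p1 = sat D F R e' p1" by (rule Conj.IH(1)) (use Conj.prems in auto)
  moreover have "sat D F R e p2 = sat D F R e' p2" by (rule Conj.IH(2)) (use Conj.prems in auto)
  ultimately show ?case by (simp only: sat.simps)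
next
  case (Disj p1 p2)
  have "sat D F R e p1 = sat D F R e' p1" by (rule Disj.IH(1)) (use Disj.prems in auto)
  moreover have "sat D F R e p2 = sat D F R e' p2" by (rule Disj.IH(2)) (use Disj.prems in auto)
  ultimately show ?case by (simp only: sat.simps)
next
  case (Imp p1 p2)
  have "sat D F R e p1 = sat D F R e' p1" by (rule Imp.IH(1)) (use Imp.prems in auto)
  moreover have "sat D F R e p2 = sat D F R e' p2" by (rule Imp.IH(2)) (use Imp.prems in auto)
  ultimately show ?case by (simp only: sat.simps)
qed simp_all

lemma ren_trm_eval: "teval F e (ren_trm g t) = teval (\<lambda>a. F (g a)) e t"
proof (induction t)
  case (Fn f ts)
  have "map (\<lambda>t. teval F e (ren_trm g t)) ts = map (teval (\<lambda>a. F (g a)) e) ts"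
    by (rule map_cong[OF refl]) (rule Fn.IH)
  then show ?case by (simp only: teval.simps ren_trm.simps map_map comp_def)
qed simp

lemma ren_sat: "sat D F R e (ren g p) = sat D (\<lambda>a. F (g a)) (\<lambda>a. R (g a)) e p"
proof (induction p arbitrary: e)
  case (Pr r ts)
  have "map (\<lambda>t. teval F e (ren_trm g t)) ts = map (teval (\<lambda>a. F (g a)) e) ts"
    by (rule map_cong[OF refl]) (rule ren_trm_eval)
  then show ?case by (simp only: sat.simps ren.simps map_map comp_def)
qed (auto simp: ren_trm_eval)

lemma subst_trm_eval: "fv_trm u = {} \<Longrightarrow>
   teval F e (subst_trm x u t) = teval F (e(x := teval F e u)) t"
proof (induction t)
  case (Fn f ts)
  have "map (\<lambda>t. teval F e (subst_trm x u t)) ts = map (teval F (e(x := teval F e u))) ts"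
    by (rule map_cong[OF refl]) (rule Fn.IH, assumption, rule Fn.prems)
  then show ?case by (simp only: teval.simps subst_trm.simps map_map comp_def)
qed simp

lemma closed_trm_env: "fv_trm u = {} \<Longrightarrow> teval F e u = teval F e' u"
  using env_trm by blast

lemma subst_sat: "fv_trm u = {} \<Longrightarrow>
   sat D F R e (subst x u p) = sat D F R (e(x := teval F e u)) p"
proof (induction p arbitrary: e)
  case (Pr r ts)
  have "map (\<lambda>t. teval F e (subst_trm x u t)) ts = map (teval F (e(x := teval F e u))) ts"
    by (rule map_cong[OF refl]) (rule subst_trm_eval, rule Pr.prems)
  then show ?case by (simp only: sat.simps subst.simps map_map comp_def)
next
  case (All y a)
  show ?case
  proof (cases "y = x")
    case False
    have c: "\<And>d. teval F (e(y := d)) u = teval F e u" using closed_trm_env[OF All.prems] by blast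
    have "\<And>d. sat D F R (e(y := d)) (subst x u a) = sat D F R (e(x := teval F e u, y := d)) a"
    proof -
      fix d
      have "sat D F R (e(y := d)) (subst x u a) = sat D F R ((e(y:=d))(x := teval F (e(y:=d)) u)) a"
        by (rule All.IH[OF All.prems])
      also have "(e(y:=d))(x := teval F (e(y:=d)) u) = e(x := teval F e u, y := d)"
        using False by (intro ext) (simp add: c)
      finally show "sat D F R (e(y := d)) (subst x u a) = sat D F R (e(x := teval F e u, y := d)) a" .
    qed
    then show ?thesis using False by (simp only: sat.simps subst.simps if_False)
  next
    case True
    then show ?thesis by (simp only: sat.simps subst.simps simp_thms if_True fun_upd_upd)
  qed
next
  case (Ex y a)
  show ?case
  proof (cases "y = x")
    case False
    have c: "\<And>d. teval F (e(y := d)) u = teval F e u" using closed_trm_env[OF Ex.prems] by blast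
    have "\<And>d. sat D F R (e(y := d)) (subst x u a) = sat D F R (e(x := teval F e u, y := d)) a"
    proof -
      fix d
      have "sat D F R (e(y := d)) (subst x u a) = sat D F R ((e(y:=d))(x := teval F (e(y:=d)) u)) a"
        by (rule Ex.IH[OF Ex.prems])
      also have "(e(y:=d))(x := teval F (e(y:=d)) u) = e(x := teval F e u, y := d)"
        using False by (intro ext) (simp add: c)
      finally show "sat D F R (e(y := d)) (subst x u a) = sat D F R (e(x := teval F e u, y := d)) a" .
    qed
    then show ?thesis using False by (simp only: sat.simps subst.simps if_False)
  next
    case True
    then show ?thesis by (simp only: sat.simps subst.simps simp_thms if_True fun_upd_upd)
  qed
qed (auto simp: subst_trm_eval)


lemma sat2_conj: "sat2 D s t (Conj a b) = (sat2 D s t a \<and> sat2 D s t b)"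
  by (auto simp: sat2_def)

lemma sat1_conj: "sat1 D s (Conj a b) = (sat1 D s a \<and> sat1 D s b)"
  by (auto simp: sat1_def sat2_def)

lemma sat2_unprimed: "wf_fm V {False} p \<Longrightarrow> sat2 D s t p = sat1 D s p"
  unfolding sat1_def sat2_def
  by (intro all_cong1 imp_cong refl agree_fm[where V=V and ps="{False}"]) (auto simp: jfn_def jrl_def)

lemma jfn_prime: "(\<lambda>a. jfn s t ((\<lambda>(n, p). (n, True)) a)) = jfn t t"
  by (intro ext) (auto simp: jfn_def split: prod.splits)

lemma jrl_prime: "(\<lambda>a. jrl s t ((\<lambda>(n, p). (n, True)) a)) = jrl t t"
  by (intro ext) (auto simp: jrl_def split: prod.splits)

lemma jfn_inv: "(\<lambda>a. jfn s t ((\<lambda>(n, p). (n, \<not> p)) a)) = jfn t s"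
  by (intro ext) (auto simp: jfn_def split: prod.splits)

lemma jrl_inv: "(\<lambda>a. jrl s t ((\<lambda>(n, p). (n, \<not> p)) a)) = jrl t s"
  by (intro ext) (auto simp: jrl_def split: prod.splits)

lemma sat_prime: "sat D (jfn s t) (jrl s t) e (prime p) = sat D (jfn t t) (jrl t t) e p"
  unfolding prime_def ren_sat jfn_prime jrl_prime ..

lemma sat2_prime: "sat2 D s t (prime p) = sat1 D t p"
  unfolding sat1_def sat2_def sat_prime ..

lemma sat2_inv: "sat2 D s t (inv p) = sat2 D t s p"
  unfolding sat2_def inv_def ren_sat jfn_inv jrl_inv ..

lemma valid_mp:
  fixes D :: "'a set"
  assumes "valid TYPE('a) (Imp a b)" "D \<noteq> {}" "wf_state D s" "wf_state D t" "sat2 D s t a"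
  shows "sat2 D s t b"
  using assms unfolding valid_def sat2_def by auto

lemma closed_neg: "closed p \<Longrightarrow> \<not> sat1 D s p \<Longrightarrow> sat1 D s (Neg p)"
proof -
  assume c: "closed p" and n: "\<not> sat1 D s p"
  have eq: "sat D F R e p = sat D F R e' p" for F R e e'
    using c env_fm[of p e e' D F R] by (simp add: closed_def)
  show ?thesis using n unfolding sat1_def sat2_def using eq by auto
qed

lemma sat1_contra: "D \<noteq> {} \<Longrightarrow> sat1 D s p \<Longrightarrow> sat1 D s (Neg p) \<Longrightarrow> False"
  unfolding sat1_def sat2_def
proof -
  assume "D \<noteq> {}" and a: "\<forall>e. (\<forall>x. e x \<in> D) \<longrightarrow> sat D (jfn s s) (jrl s s) e p"
    and b: "\<forall>e. (\<forall>x. e x \<in> D) \<longrightarrow> sat D (jfn s s) (jrl s s) e (Neg p)"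
  then obtain d where "d \<in> D" by auto
  then show False using a b by (auto dest: spec[of _ "\<lambda>_. d"])
qed

lemma trace_step: "is_trace D tr ss \<Longrightarrow> Suc j < length ss \<Longrightarrow> sat2 D (ss!j) (ss!Suc j) tr"
  by (simp add: is_trace_def)

lemma trace_wf: "is_trace D tr ss \<Longrightarrow> j < length ss \<Longrightarrow> wf_state D (ss!j)"
  by (simp add: is_trace_def)

lemma trace_ne: "is_trace D tr ss \<Longrightarrow> D \<noteq> {}"
  by (simp add: is_trace_def)

lemma trace_take: "is_trace D tr ss \<Longrightarrow> is_trace D tr (take k ss)"
  unfolding is_trace_def by (auto dest: in_set_takeD)

lemma ind_sound:
  fixes D :: "'a set"
  assumes phi: "closed_over V phi"
    and v1: "valid TYPE('a) (Imp i phi)"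
    and v2: "valid TYPE('a) (Imp (Conj phi tr) (prime phi))"
    and ne: "ss \<noteq> []" and tr: "is_trace D tr ss"
    and h: "sat1 D (hd ss) i" and l: "sat1 D (last ss) (Neg phi)"
  shows False
proof -
  have D: "D \<noteq> {}" using tr trace_ne by blast
  have wphi: "wf_fm V {False} phi" using phi closed_over_def by blast
  have all: "j < length ss \<Longrightarrow> sat1 D (ss!j) phi" for j
  proof (induction j)
    case 0
    have "sat2 D (ss!0) (ss!0) i" using h ne by (simp add: hd_conv_nth sat1_def)
    then have "sat2 D (ss!0) (ss!0) phi"
      using valid_mp[OF v1 D] trace_wf[OF tr 0] by blast
    then show ?case by (simp add: sat1_def)
  next
    case (Suc j)
    then have a: "sat1 D (ss!j) phi" by simp
    have "sat2 D (ss!j) (ss!Suc j) (Conj phi tr)"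
      using a sat2_unprimed[OF wphi] trace_step[OF tr Suc.prems] sat2_conj by blast
    then have "sat2 D (ss!j) (ss!Suc j) (prime phi)"
      using valid_mp[OF v2 D] trace_wf[OF tr] Suc.prems by simp
    then show ?case by (simp add: sat2_prime)
  qed
  have "sat1 D (last ss) phi" using all ne by (simp add: last_conv_nth)
  then show False using sat1_contra[OF D _ l] by blast
qed

lemma cons_sound:
  fixes D :: "'a set"
  assumes child: "safe TYPE('a) (V, i, tr, Neg phi)"
    and v: "valid TYPE('a) (Imp phi (Neg b))"
    and ne: "ss \<noteq> []" and tr: "is_trace D tr ss"
    and h: "sat1 D (hd ss) i" and l: "sat1 D (last ss) b"
  shows False
proof -
  have D: "D \<noteq> {}" using tr trace_ne by blast
  have wl: "wf_state D (last ss)" using tr ne unfolding is_trace_def by auto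
  have vv: "sat2 D (last ss) (last ss) (Imp phi (Neg b))"
    using v wl D unfolding valid_def by blast
  have "sat1 D (last ss) (Neg phi)"
    unfolding sat1_def sat2_def
  proof (intro allI impI)
    fix e :: "nat \<Rightarrow> 'a" assume e: "\<forall>x. e x \<in> D"
    have "sat D (jfn (last ss) (last ss)) (jrl (last ss) (last ss)) e b"
      using l e unfolding sat1_def sat2_def by blast
    moreover have "sat D (jfn (last ss) (last ss)) (jrl (last ss) (last ss)) e (Imp phi (Neg b))"
      using vv e unfolding sat2_def by blast
    ultimately show "sat D (jfn (last ss) (last ss)) (jrl (last ss) (last ss)) e (Neg phi)"
      by simp
  qed
  then show False using child ne tr h by (simp only: safe.simps) blast
qed

lemma rev_sound:
  fixes D :: "'a set"
  assumes child: "safe TYPE('a) (V, b, inv tr, i)"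
    and ne: "ss \<noteq> []" and tr: "is_trace D tr ss"
    and h: "sat1 D (hd ss) i" and l: "sat1 D (last ss) b"
  shows False
proof -
  have "is_trace D (inv tr) (rev ss)"
    unfolding is_trace_def
  proof (intro conjI allI impI)
    show "D \<noteq> {}" using tr trace_ne by blast
    show "\<forall>s\<in>set (rev ss). wf_state D s" using tr by (simp add: is_trace_def)
    fix k assume k: "Suc k < length (rev ss)"
    define j where "j = length ss - Suc (Suc k)"
    have e1: "rev ss ! k = ss ! Suc j" using k by (simp add: rev_nth j_def Suc_diff_Suc)
    have e2: "rev ss ! Suc k = ss ! j" using k by (simp add: rev_nth j_def)
    have "Suc j < length ss" using k j_def by simp
    then show "sat2 D (rev ss ! k) (rev ss ! Suc k) (inv tr)"
      unfolding e1 e2 sat2_inv using trace_step[OF tr] by blast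
  qed
  moreover have "hd (rev ss) = last ss" "last (rev ss) = hd ss" using ne
    by (simp_all add: hd_rev last_rev)
  ultimately show False using child ne h l by (simp only: safe.simps) (metis Nil_is_rev_conv)
qed

lemma inc_sound:
  fixes D :: "'a set"
  assumes phi: "closed_over V phi"
    and c1: "safe TYPE('a) (V, i, tr, Neg phi)"
    and c2: "safe TYPE('a) (V, Conj i phi, Conj tr (Conj phi (prime phi)), Conj b phi)"
    and ne: "ss \<noteq> []" and tr: "is_trace D tr ss"
    and h: "sat1 D (hd ss) i" and l: "sat1 D (last ss) b"
  shows False
proof -
  have wphi: "wf_fm V {False} phi" and cphi: "closed phi" using phi closed_over_def by auto
  have all: "sat1 D (ss!j) phi" if j: "j < length ss" for j
  proof (rule ccontr)
    assume "\<not> sat1 D (ss!j) phi"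
    then have n: "sat1 D (ss!j) (Neg phi)" using closed_neg[OF cphi] by blast
    have "take (Suc j) ss \<noteq> []" using ne by simp
    moreover have "is_trace D tr (take (Suc j) ss)" using trace_take[OF tr] .
    moreover have "hd (take (Suc j) ss) = hd ss" using ne by simp
    moreover have "last (take (Suc j) ss) = ss ! j" using j
      by (simp add: take_Suc_conv_app_nth)
    ultimately show False using c1 h n by (simp only: safe.simps) metis
  qed
  have "is_trace D (Conj tr (Conj phi (prime phi))) ss"
    unfolding is_trace_def
  proof (intro conjI allI impI)
    show "D \<noteq> {}" using tr trace_ne by blast
    show "\<forall>s\<in>set ss. wf_state D s" using tr by (simp add: is_trace_def)
    fix k assume k: "Suc k < length ss"
    show "sat2 D (ss ! k) (ss ! Suc k) (Conj tr (Conj phi (prime phi)))"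
      using trace_step[OF tr k] all[of k] all[of "Suc k"] k
      by (simp add: sat2_conj sat2_prime sat2_unprimed[OF wphi])
  qed
  moreover have "sat1 D (hd ss) phi" "sat1 D (last ss) phi" using all ne
    by (simp_all add: hd_conv_nth last_conv_nth)
  ultimately show False using c2 ne h l by (simp only: safe.simps sat1_conj) blast
qed


lemma const_env: "D \<noteq> {} \<Longrightarrow> (\<forall>e. (\<forall>x. e x \<in> D) \<longrightarrow> c) = c"
proof -
  assume "D \<noteq> {}"
  then obtain d0 where "d0 \<in> D" by blast
  have w: "\<forall>x. (\<lambda>_. d0) x \<in> D" using \<open>d0 \<in> D\<close> by simp
  show ?thesis
  proof
    assume a: "\<forall>e. (\<forall>x. e x \<in> D) \<longrightarrow> c"
    show c using spec[OF a, of "\<lambda>_. d0"] \<open>d0 \<in> D\<close> by simp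
  qed blast
qed

lemma fresh_sat2:
  assumes "wf_fm V ps p" "V w = None"
    "\<forall>k. k \<noteq> w \<longrightarrow> sfn s' k = sfn s k \<and> srl s' k = srl s k"
    "\<forall>k. k \<noteq> w \<longrightarrow> sfn t' k = sfn t k \<and> srl t' k = srl t k"
  shows "sat2 D s' t' p = sat2 D s t p"
proof -
  have "sat D (jfn s' t') (jrl s' t') e p = sat D (jfn s t) (jrl s t) e p" for e
  proof (rule agree_fm[OF assms(1)], intro allI impI)
    fix k q assume "V k \<noteq> None" "q \<in> ps"
    then have "k \<noteq> w" using assms(2) by auto
    then show "jfn s' t' (k, q) = jfn s t (k, q) \<and> jrl s' t' (k, q) = jrl s t (k, q)"
      using assms(3,4) by (simp add: jfn_def jrl_def)
  qed
  then show ?thesis unfolding sat2_def by simp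
qed

lemma fresh_sat1:
  assumes "wf_fm V ps p" "V w = None"
    "\<forall>k. k \<noteq> w \<longrightarrow> sfn s' k = sfn s k \<and> srl s' k = srl s k"
  shows "sat1 D s' p = sat1 D s p"
  unfolding sat1_def using fresh_sat2[OF assms(1,2,3,3)] .

lemma phi_eval:
  assumes "wf_fm V {False} phi" "fv phi \<subseteq> {x}"
    "\<forall>k. V k \<noteq> None \<longrightarrow> F (k,False) = sfn s k \<and> R (k,False) = srl s k"
  shows "sat D F R (e(x:=d)) phi = sat D (jfn s s) (jrl s s) (\<lambda>_. d) phi"
proof -
  have "sat D F R (e(x:=d)) phi = sat D (jfn s s) (jrl s s) (e(x:=d)) phi"
    by (rule agree_fm[OF assms(1)]) (use assms(3) in \<open>auto simp: jfn_def jrl_def\<close>)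
  also have "\<dots> = sat D (jfn s s) (jrl s s) (\<lambda>_. d) phi"
    by (rule env_fm) (use assms(2) in auto)
  finally show ?thesis .
qed

lemma proph_sound_lemma:
  fixes D :: "'a set"
  assumes wfp: "wf_problem (V, i, tr, b)"
    and Vw: "V w = None" and Vm: "V m = None"
    and wphi: "wf_fm V {False} phi" and fvphi: "fv phi \<subseteq> {x}"
    and c1: "safe TYPE('a) (proph_sound (V, i, tr, b) x phi m)"
    and c2: "safe TYPE('a) (proph_w (V, i, tr, b) x phi w)"
    and ne: "ss \<noteq> []" and tr: "is_trace D tr ss"
    and h: "sat1 D (hd ss) i" and l: "sat1 D (last ss) b"
  shows False
proof -
  have wi: "wf_fm V {False} i" and wtr: "wf_fm V UNIV tr" and wb: "wf_fm V {False} b"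
    using wfp by (auto simp: closed_over_def closed_over2_def)
  have D: "D \<noteq> {}" using tr trace_ne by blast
  define n where "n = length ss"
  have n0: "0 < n" using ne n_def by simp
  have hdn: "hd ss = ss ! 0" using ne by (simp add: hd_conv_nth)
  have lastn: "last ss = ss ! (n - 1)" using ne n_def by (simp add: last_conv_nth)
  define P where "P l d \<longleftrightarrow> sat D (jfn (ss!l) (ss!l)) (jrl (ss!l) (ss!l)) (\<lambda>_. d) phi" for l d
  show False
  proof (cases "\<exists>d\<in>D. \<forall>l<n. P l d")
    case True
    then obtain d where dD: "d \<in> D" and Pd: "\<And>l. l < n \<Longrightarrow> P l d" by blast
    define upd where "upd s = s\<lparr>sfn := (sfn s)(w := \<lambda>_. d)\<rparr>" for s :: "'a state"
    define ss' where "ss' = map upd ss"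
    define cw where "cw = Fn (w, False) []"
    define cw' where "cw' = Fn (w, True) []"
    define pw where "pw = subst x cw phi"
    define trw where "trw = Conj pw (Conj tr (Conj (Eq cw' cw) (prime pw)))"
    have fr: "\<forall>k. k \<noteq> w \<longrightarrow> sfn (upd s) k = sfn s k \<and> srl (upd s) k = srl s k" for s
      by (simp add: upd_def)
    have pw_eval: "sat2 D (upd s) t' pw \<longleftrightarrow> sat D (jfn s s) (jrl s s) (\<lambda>_. d) phi" for s t'
    proof -
      have A: "sat D (jfn (upd s) t') (jrl (upd s) t') e pw \<longleftrightarrow> sat D (jfn s s) (jrl s s) (\<lambda>_. d) phi" for e
      proof -
        have "sat D (jfn (upd s) t') (jrl (upd s) t') e pw = sat D (jfn (upd s) t') (jrl (upd s) t') (e(x := teval (jfn (upd s) t') e cw)) phi"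
          unfolding pw_def by (rule subst_sat) (simp add: cw_def)
        also have "teval (jfn (upd s) t') e cw = d" by (simp add: cw_def jfn_def upd_def)
        also have "sat D (jfn (upd s) t') (jrl (upd s) t') (e(x := d)) phi = sat D (jfn s s) (jrl s s) (\<lambda>_. d) phi"
          by (rule phi_eval[OF wphi fvphi]) (use Vw in \<open>auto simp: jfn_def jrl_def upd_def\<close>)
        finally show ?thesis .
      qed
      show ?thesis unfolding sat2_def A using const_env[OF D] by blast
    qed
    have wfu: "wf_state D s \<Longrightarrow> wf_state D (upd s)" for s
      using dD by (simp add: wf_state_def upd_def)
    have len: "length ss' = n" by (simp add: ss'_def n_def)
    have nth': "k < n \<Longrightarrow> ss' ! k = upd (ss ! k)" for k by (simp add: ss'_def n_def)
    have "is_trace D trw ss'"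
      unfolding is_trace_def
    proof (intro conjI allI impI ballI)
      show "D \<noteq> {}" by (rule D)
      fix s assume "s \<in> set ss'"
      then obtain s0 where "s0 \<in> set ss" "s = upd s0" by (auto simp: ss'_def)
      then show "wf_state D s" using tr wfu by (auto simp: is_trace_def)
    next
      fix k assume k: "Suc k < length ss'"
      then have k1: "k < n" "Suc k < n" using len by auto
      have "sat2 D (upd (ss!k)) (upd (ss!Suc k)) pw" using pw_eval Pd[OF k1(1)] P_def by simp
      moreover have "sat2 D (upd (ss!k)) (upd (ss!Suc k)) tr"
        using fresh_sat2[OF wtr Vw fr fr] trace_step[OF tr] k1 n_def by simp
      moreover have "sat2 D (upd (ss!k)) (upd (ss!Suc k)) (Eq cw' cw)"
        by (simp add: sat2_def jfn_def upd_def cw_def cw'_def)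
      moreover have "sat2 D (upd (ss!k)) (upd (ss!Suc k)) (prime pw)"
        unfolding sat2_prime sat1_def using pw_eval Pd[OF k1(2)] P_def by simp
      ultimately show "sat2 D (ss' ! k) (ss' ! Suc k) trw"
        unfolding trw_def nth'[OF k1(1)] nth'[OF k1(2)] sat2_conj by blast
    qed
    moreover have "ss' \<noteq> []" using ne by (simp add: ss'_def)
    moreover have "sat1 D (hd ss') (Conj i pw)"
    proof -
      have "hd ss' = upd (ss!0)" using ne by (simp add: ss'_def hd_map hdn)
      moreover have "sat1 D (upd (ss!0)) i" using fresh_sat1[OF wi Vw fr] h hdn by simp
      moreover have "sat1 D (upd (ss!0)) pw" unfolding sat1_def using pw_eval Pd[OF n0] P_def by simp
      ultimately show ?thesis by (simp add: sat1_conj)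
    qed
    moreover have "sat1 D (last ss') (Conj b pw)"
    proof -
      have "last ss' = upd (ss!(n-1))" using ne by (simp add: ss'_def lastn last_map)
      moreover have "sat1 D (upd (ss!(n-1))) b" using fresh_sat1[OF wb Vw fr] l lastn by simp
      moreover have "sat1 D (upd (ss!(n-1))) pw" unfolding sat1_def using pw_eval Pd n0 P_def by simp
      ultimately show ?thesis by (simp add: sat1_conj)
    qed
    moreover have "proph_w (V, i, tr, b) x phi w = (V(w \<mapsto> FunK 0), Conj i pw, trw, Conj b pw)"
      by (simp add: pw_def cw_def cw'_def trw_def Let_def)
    ultimately show False using c2 by (simp only: safe.simps) blast
  next
    case False
    then have notall: "\<And>d. d \<in> D \<Longrightarrow> \<exists>l<n. \<not> P l d" by blast
    define M where "M j d \<longleftrightarrow> (\<forall>l\<le>j. P l d)" for j d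
    have MSuc: "M (Suc j) d \<longleftrightarrow> M j d \<and> P (Suc j) d" for j d
      unfolding M_def by (auto simp: le_Suc_eq)
    have M0: "M 0 d \<longleftrightarrow> P 0 d" for d unfolding M_def by simp
    define upd where "upd j = (ss!j)\<lparr>srl := (srl (ss!j))(m := \<lambda>as. M j (hd as))\<rparr>" for j
    define ss' where "ss' = map upd [0..<n]"
    have phiU: "sat D (jfn (upd j) t') (jrl (upd j) t') (e(x:=d)) phi = P j d" for j t' e d
      unfolding P_def
      by (rule phi_eval[OF wphi fvphi]) (use Vm in \<open>auto simp: jfn_def jrl_def upd_def\<close>)
    have primeU: "sat D (jfn s' (upd j)) (jrl s' (upd j)) (e(x:=d)) (prime phi) = P j d" for j s' e d
      unfolding sat_prime phiU ..
    have mF: "jrl (upd j) t' (m, False) = (\<lambda>as. M j (hd as))" for j t'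
      by (simp add: jrl_def upd_def)
    have mT: "jrl s' (upd j) (m, True) = (\<lambda>as. M j (hd as))" for j s'
      by (simp add: jrl_def upd_def)
    have fr: "\<forall>k. k \<noteq> m \<longrightarrow> sfn (upd j) k = sfn (ss!j) k \<and> srl (upd j) k = srl (ss!j) k" for j
      by (simp add: upd_def)
    have len: "length ss' = n" by (simp add: ss'_def)
    have nth': "k < n \<Longrightarrow> ss' ! k = upd k" for k by (simp add: ss'_def)
    define A1 where "A1 = All x (Imp phi (Pr (m, False) [Var x]))"
    define A2 where "A2 = All x (Imp (Conj (Pr (m, False) [Var x]) (Conj phi (prime phi)))
                          (Pr (m, True) [Var x]))"
    define A3 where "A3 = All x (Imp phi (Neg (Pr (m, False) [Var x])))"
    have "is_trace D (Conj tr A2) ss'"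
      unfolding is_trace_def
    proof (intro conjI allI impI ballI)
      show "D \<noteq> {}" by (rule D)
      fix s assume "s \<in> set ss'"
      then obtain j where "j < n" "s = upd j" by (auto simp: ss'_def)
      then show "wf_state D s" using trace_wf[OF tr] n_def by (simp add: wf_state_def upd_def)
    next
      fix k assume k: "Suc k < length ss'"
      then have k1: "k < n" "Suc k < n" using len by auto
      have "sat2 D (upd k) (upd (Suc k)) tr"
        using fresh_sat2[OF wtr Vm fr fr] trace_step[OF tr] k1 n_def by simp
      moreover have "sat2 D (upd k) (upd (Suc k)) A2"
        unfolding sat2_def A2_def by (simp add: phiU primeU mF mT MSuc)
      ultimately show "sat2 D (ss' ! k) (ss' ! Suc k) (Conj tr A2)"
        unfolding nth'[OF k1(1)] nth'[OF k1(2)] sat2_conj by blast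
    qed
    moreover have "ss' \<noteq> []" using n0 by (simp add: ss'_def)
    moreover have "sat1 D (hd ss') (Conj i A1)"
    proof -
      have "hd ss' = upd 0" using n0 by (simp add: ss'_def hd_map)
      moreover have "sat1 D (upd 0) i" using fresh_sat1[OF wi Vm fr] h hdn by simp
      moreover have "sat1 D (upd 0) A1"
        unfolding sat1_def sat2_def A1_def by (simp add: phiU mF M0)
      ultimately show ?thesis by (simp add: sat1_conj)
    qed
    moreover have "sat1 D (last ss') (Conj b A3)"
    proof -
      have "last ss' = upd (n-1)" using n0 by (simp add: ss'_def last_map)
      moreover have "sat1 D (upd (n-1)) b" using fresh_sat1[OF wb Vm fr] l lastn by simp
      moreover have "sat1 D (upd (n-1)) A3"
      proof -
        have "\<not> M (n-1) d" if dD': "d \<in> D" for d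
        proof
          assume a: "M (n-1) d"
          obtain l where l: "l < n" "\<not> P l d" using notall[OF dD'] by blast
          have "l \<le> n - 1" using l(1) by linarith
          then show False using a l(2) unfolding M_def by blast
        qed
        then show ?thesis unfolding sat1_def sat2_def A3_def by (simp add: phiU mF)
      qed
      ultimately show ?thesis by (simp add: sat1_conj)
    qed
    moreover have "proph_sound (V, i, tr, b) x phi m = (V(m \<mapsto> RelK 1), Conj i A1, Conj tr A2, Conj b A3)"
      by (simp add: A1_def A2_def A3_def)
    ultimately show False using c1 by (simp only: safe.simps) blast
  qed
qed


lemma proof_safe: "is_proof TYPE('a) P \<Longrightarrow> safe TYPE('a) (root P)"
proof (induction P)
  case (Node p cs)
  obtain V i tr b where p: "p = (V, i, tr, b)" by (cases p)
  have wf: "wf_problem p" and ri: "rule_inst TYPE('a) p (map root cs)"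
    and kids: "\<forall>c\<in>set cs. is_proof TYPE('a) c" using Node.prems by auto
  have ks: "\<forall>q\<in>set (map root cs). safe TYPE('a) q" using Node.IH kids by auto
  have False if A: "ss \<noteq> []" "is_trace D tr ss" "sat1 D (hd ss) i" "sat1 D (last ss) b"
    for D :: "'a set" and ss
    using ri[unfolded p rule_inst.simps]
    apply (elim disjE exE conjE)
    subgoal for phi
      using ind_sound[of V phi i tr ss D] A unfolding implies_def by blast
    subgoal for phi
    proof -
      assume a: "closed_over V phi" "map root cs = [(V, i, tr, Neg phi)]" "implies TYPE('a) phi (Neg b)"
      have "safe TYPE('a) (V, i, tr, Neg phi)" using ks a(2) by (metis list.set_intros(1))
      then show False using cons_sound[of V i tr phi b ss D] A a(3) unfolding implies_def by blast
    qed
    subgoal for phi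
    proof -
      assume a: "closed_over V phi" "map root cs = [(V, i, tr, Neg phi),
              (V, Conj i phi, Conj tr (Conj phi (prime phi)), Conj b phi)]"
      have "safe TYPE('a) (V, i, tr, Neg phi)" "safe TYPE('a) (V, Conj i phi, Conj tr (Conj phi (prime phi)), Conj b phi)"
        using ks a(2) by (metis list.set_intros(1), metis list.set_intros)
      then show False using inc_sound[of V phi i tr b ss D] A a(1) by blast
    qed
    subgoal
    proof -
      assume a: "map root cs = [(V, b, inv tr, i)]"
      have "safe TYPE('a) (V, b, inv tr, i)" using ks a by (metis list.set_intros(1))
      then show False using rev_sound[of V b tr i ss D] A by blast
    qed
    subgoal for w m x phi
    proof -
      assume a: "V w = None" "V m = None" "wf_fm V {False} phi" "fv phi \<subseteq> {x}"
        "map root cs = [proph_sound (V, i, tr, b) x phi m, proph_w (V, i, tr, b) x phi w]"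
      have "safe TYPE('a) (proph_sound (V, i, tr, b) x phi m)" "safe TYPE('a) (proph_w (V, i, tr, b) x phi w)"
        using ks a(5) by (metis list.set_intros(1), metis list.set_intros)
      then show False using proph_sound_lemma[of V i tr b w m phi x ss D] A a(1-4) wf p by blast
    qed
    done
  then show ?case unfolding p root.simps safe.simps by blast
qed

theorem theorem5p4:
  fixes Pi :: problem
  assumes "wf_problem Pi"
    and "has_fbpi_proof TYPE('a) Pi"
  shows "safe TYPE('a) Pi"
  using assms(2) proof_safe unfolding has_fbpi_proof_def by blast

end
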